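(* Let $\mathcal{X}=\{x\in\mathbb{R}^d:\|x\|\le1\}$, $\mathcal{F}=\{x\mapsto\langle\theta,x\rangle:\|\theta\|\le1\}$ and $\mathcal{F}^+=\{x\mapsto\langle\theta,x\rangle:\theta\in\mathbb{R}^d\}$. There exist absolute constants $c,C,d_0,\Delta_0>0$ such that: (i) for all $d\ge d_0$ and all $\Delta\in(0,\tfrac12]$, $\log N_{\mathsf{frac}}(\mathcal{F},\mathcal{F};\Delta)\ge c\,d$; (ii) for all $d\ge1$ and all $\Delta\in(0,\Delta_0]$, $\log N_{\mathsf{frac}}(\mathcal{F},\mathcal{F}^+;\Delta)\le\frac{C}{\Delta^2}\log\frac1\Delta$.
   Context: For function classes $\mathcal{F}\subseteq\mathcal{F}^+$ of real functions on $\mathcal{X}$, $N_{\mathsf{frac}}(\mathcal{F},\mathcal{F}^+;\Delta)=\inf_{p\in\Delta(\mathcal{F}^+)}\sup_{\mu\in\Delta(\mathcal{X}),f^\star\in\mathcal{F}}\frac1{p(\{f:\mathbb{E}_{x\sim\mu}|f(x)-f^\star(x)|\le\Delta\})}$. $\|\cdot\|$ is the Euclidean norm. *)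

theory Defs
  imports "HOL-Probability.Probability"
begin

text \<open>Vectors in R^d are represented as extensional functions on the index set {..<d}
  (the space of the product measure space below), so that the dimension d can be
  quantified inside the statement.\<close>

definition vecs :: "nat \<Rightarrow> (nat \<Rightarrow> real) measure" where
  "vecs d = PiM {..<d} (\<lambda>_. borel)"

definition inner_d :: "nat \<Rightarrow> (nat \<Rightarrow> real) \<Rightarrow> (nat \<Rightarrow> real) \<Rightarrow> real" where
  "inner_d d u v = (\<Sum>i<d. u i * v i)"

definition norm_d :: "nat \<Rightarrow> (nat \<Rightarrow> real) \<Rightarrow> real" where
  "norm_d d u = sqrt (\<Sum>i<d. (u i)^2)"

definition dists_X :: "nat \<Rightarrow> (nat \<Rightarrow> real) measure set" where
  "dists_X d = {\<mu>. prob_space \<mu> \<and> sets \<mu> = sets (vecs d) \<and>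
      emeasure \<mu> {x \<in> space (vecs d). norm_d d x \<le> 1} = 1}"

text \<open>Probability distributions over a class of linear functions x \<mapsto> <theta,x>,
  parametrized by theta, where the class is {theta. H theta}.\<close>
definition dists_class :: "nat \<Rightarrow> ((nat \<Rightarrow> real) \<Rightarrow> bool) \<Rightarrow> (nat \<Rightarrow> real) measure set" where
  "dists_class d H = {p. prob_space p \<and> sets p = sets (vecs d) \<and>
      emeasure p {\<theta> \<in> space (vecs d). H \<theta>} = 1}"

definition close_set :: "nat \<Rightarrow> (nat \<Rightarrow> real) measure \<Rightarrow> (nat \<Rightarrow> real) \<Rightarrow> real \<Rightarrow> (nat \<Rightarrow> real) set" where
  "close_set d \<mu> \<theta>s \<Delta> = {\<theta> \<in> space (vecs d).
      (\<integral>\<^sup>+ x. ennreal \<bar>inner_d d \<theta> x - inner_d d \<theta>s x\<bar> \<partial>\<mu>) \<le> ennreal \<Delta>}"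

text \<open>Fractional covering number N_frac(F, F^+; Delta), where F = {<theta,.> : G theta} and
  F^+ = {<theta,.> : H theta}. Value in ennreal; 1/0 = top.\<close>
definition N_frac :: "nat \<Rightarrow> ((nat \<Rightarrow> real) \<Rightarrow> bool) \<Rightarrow> ((nat \<Rightarrow> real) \<Rightarrow> bool) \<Rightarrow> real \<Rightarrow> ennreal" where
  "N_frac d G H \<Delta> = (INF p \<in> dists_class d H.
      SUP (\<mu>, \<theta>s) \<in> dists_X d \<times> {\<theta> \<in> space (vecs d). G \<theta>}.
        inverse (emeasure p (close_set d \<mu> \<theta>s \<Delta>)))"

definition unit_pred :: "nat \<Rightarrow> (nat \<Rightarrow> real) \<Rightarrow> bool" where
  "unit_pred d \<theta> \<longleftrightarrow> norm_d d \<theta> \<le> 1"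

end

theory Submission
  imports Defs
begin


definition LL :: "nat \<Rightarrow> 'a set \<Rightarrow> 'a list set" where
  "LL n A = {xs. set xs \<subseteq> A \<and> length xs = n}"

abbreviation SG :: "nat \<Rightarrow> real list set" where "SG n \<equiv> LL n {1,-1}"

definition ip :: "nat \<Rightarrow> real list \<Rightarrow> (nat \<Rightarrow> real) \<Rightarrow> real" where
  "ip n s v = (\<Sum>i<n. s!i * v i)"

lemma LL_finite: "finite A \<Longrightarrow> finite (LL n A)"
  unfolding LL_def by (rule finite_lists_length_eq)

lemma LL_card: "finite A \<Longrightarrow> card (LL n A) = card A ^ n"
  unfolding LL_def by (rule card_lists_length_eq)

lemma SG_card: "card (SG n) = 2 ^ n"
proof -
  have "card {1, -1::real} = 2" by simp
  thus ?thesis by (simp only: LL_card finite.emptyI finite.insertI)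
qed

lemma LL_0[simp]: "LL 0 A = {[]}"
  unfolding LL_def by auto

lemma sum_LL_Suc:
  assumes "finite A"
  shows "sum F (LL (Suc n) A) = (\<Sum>a\<in>A. \<Sum>xs\<in>LL n A. F (a#xs))"
proof -
  have e: "LL (Suc n) A = (\<lambda>(xs, n). n#xs) ` (LL n A \<times> A)"
    unfolding LL_def by (rule lists_length_Suc_eq)
  have i: "inj_on (\<lambda>(xs, n). n#xs) (LL n A \<times> A)"
    by (auto simp: inj_on_def)
  have "sum F (LL (Suc n) A) = sum (F \<circ> (\<lambda>(xs, n). n#xs)) (LL n A \<times> A)"
    by (simp only: e sum.reindex[OF i])
  also have "\<dots> = (\<Sum>(xs,a)\<in>LL n A \<times> A. F (a#xs))"
    by (rule sum.cong) auto
  also have "\<dots> = (\<Sum>xs\<in>LL n A. \<Sum>a\<in>A. F (a#xs))"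
    by (simp add: sum.cartesian_product)
  also have "\<dots> = (\<Sum>a\<in>A. \<Sum>xs\<in>LL n A. F (a#xs))"
    by (rule sum.swap)
  finally show ?thesis .
qed

lemma sum_SG_Suc: "sum F (SG (Suc n)) = (\<Sum>xs\<in>SG n. F (1#xs)) + (\<Sum>xs\<in>SG n. F ((-1)#xs))"
  by (simp add: sum_LL_Suc)

lemma ip_Cons: "ip (Suc n) (a#s) u = a * u 0 + ip n s (\<lambda>i. u (Suc i))"
  unfolding ip_def sum.lessThan_Suc_shift by simp

lemma sum_Suc_shift: "(\<Sum>i<Suc n. f i) = f 0 + (\<Sum>i<n. f (Suc i))"
  by (rule sum.lessThan_Suc_shift)

lemma SG_mom1: "(\<Sum>s\<in>SG n. ip n s u) = 0"
proof (induction n arbitrary: u)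
  case 0 then show ?case by (simp add: ip_def)
next
  case (Suc n)
  have "(\<Sum>s\<in>SG (Suc n). ip (Suc n) s u) = (\<Sum>s\<in>SG n. 2 * ip n s (\<lambda>i. u (Suc i)))"
    unfolding sum_SG_Suc ip_Cons sum.distrib[symmetric] by (rule sum.cong) auto
  also have "\<dots> = 0" by (simp add: sum_distrib_left[symmetric] Suc)
  finally show ?case .
qed

lemma SG_mom2: "(\<Sum>s\<in>SG n. ip n s u * ip n s v) = 2^n * (\<Sum>i<n. u i * v i)"
proof (induction n arbitrary: u v)
  case 0 then show ?case by (simp add: ip_def)
next
  case (Suc n)
  let ?u = "\<lambda>i. u (Suc i)" and ?v = "\<lambda>i. v (Suc i)"
  have "(\<Sum>s\<in>SG (Suc n). ip (Suc n) s u * ip (Suc n) s v) =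
    (\<Sum>s\<in>SG n. 2 * (u 0 * v 0) + 2 * (ip n s ?u * ip n s ?v))"
    unfolding sum_SG_Suc ip_Cons sum.distrib[symmetric]
    by (rule sum.cong) (auto simp: algebra_simps)
  also have "\<dots> = 2 * 2^n * (u 0 * v 0) + 2 * (2^n * (\<Sum>i<n. ?u i * ?v i))"
    by (simp add: sum.distrib sum_distrib_left[symmetric] Suc SG_card)
  also have "\<dots> = 2^Suc n * (\<Sum>i<Suc n. u i * v i)"
    unfolding sum_Suc_shift by (simp add: algebra_simps)
  finally show ?case .
qed

lemma SG_mom2': "(\<Sum>s\<in>SG n. (ip n s u)^2) = 2^n * (\<Sum>i<n. u i ^ 2)"
  using SG_mom2[of n u u] by (simp add: power2_eq_square)

lemma SG_mom4: "(\<Sum>s\<in>SG n. (ip n s u)^2 * (ip n s v)^2) \<le>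
   2^n * ((\<Sum>i<n. u i ^ 2) * (\<Sum>i<n. v i ^ 2) + 2 * (\<Sum>i<n. u i * v i)^2)"
proof (induction n arbitrary: u v)
  case 0 then show ?case by (simp add: ip_def)
next
  case (Suc n)
  let ?u = "\<lambda>i. u (Suc i)" and ?v = "\<lambda>i. v (Suc i)"
  define a where "a = u 0" define b where "b = v 0"
  define U where "U = (\<Sum>i<n. ?u i ^ 2)" define V where "V = (\<Sum>i<n. ?v i ^ 2)"
  define W where "W = (\<Sum>i<n. ?u i * ?v i)"
  have "(\<Sum>s\<in>SG (Suc n). (ip (Suc n) s u)^2 * (ip (Suc n) s v)^2) =
    (\<Sum>s\<in>SG n. 2 * (a^2*b^2) + 2*a^2 * (ip n s ?v)^2 + 2*b^2 * (ip n s ?u)^2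
        + 2 * ((ip n s ?u)^2 * (ip n s ?v)^2) + 8*a*b * (ip n s ?u * ip n s ?v))"
    unfolding sum_SG_Suc ip_Cons sum.distrib[symmetric] a_def b_def
    by (rule sum.cong) (auto simp: algebra_simps power2_eq_square)
  also have "\<dots> = 2 * 2^n * (a^2*b^2) + 2*a^2 * (2^n * V) + 2*b^2 * (2^n*U)
     + 2 * (\<Sum>s\<in>SG n. (ip n s ?u)^2 * (ip n s ?v)^2) + 8*a*b*(2^n*W)"
    by (simp add: sum.distrib sum_distrib_left[symmetric] SG_mom2 SG_mom2' SG_card U_def V_def W_def)
  also have "\<dots> \<le> 2 * 2^n * (a^2*b^2) + 2*a^2 * (2^n * V) + 2*b^2 * (2^n*U)
     + 2 * (2^n * (U * V + 2 * W^2)) + 8*a*b*(2^n*W)"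
    using Suc[of ?u ?v] by (simp add: U_def V_def W_def power2_eq_square)
  also have "\<dots> \<le> 2^Suc n * ((\<Sum>i<Suc n. u i ^ 2) * (\<Sum>i<Suc n. v i ^ 2) + 2 * (\<Sum>i<Suc n. u i * v i)^2)"
  proof -
    have sU: "(\<Sum>i<Suc n. u i ^ 2) = a^2 + U" unfolding sum_Suc_shift a_def U_def ..
    have sV: "(\<Sum>i<Suc n. v i ^ 2) = b^2 + V" unfolding sum_Suc_shift b_def V_def ..
    have sW: "(\<Sum>i<Suc n. u i * v i) = a*b + W" unfolding sum_Suc_shift a_def b_def W_def ..
    have "2^Suc n * ((a^2 + U) * (b^2 + V) + 2 * (a*b + W)^2) - (2 * 2^n * (a^2*b^2) + 2*a^2 * (2^n * V) + 2*b^2 * (2^n*U)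
     + 2 * (2^n * (U * V + 2 * W^2)) + 8*a*b*(2^n*W)) = 2^Suc n * (2 * (a*b)^2)"
      by (simp add: algebra_simps power2_eq_square)
    moreover have "2^Suc n * (2 * (a*b)^2) \<ge> (0::real)" by simp
    ultimately show ?thesis unfolding sU sV sW by linarith
  qed
  finally show ?case .
qed

lemma cosh_bound: "exp x + exp (-x) \<le> 2 * exp ((x::real)^2/2)"
proof -
  have aux: "exp y + exp (-y) \<le> 2 * exp (y^2/2)" if "y \<ge> 0" for y :: real
  proof -
    have "-(2*y) * (1/2) + ln (1 + (1/2) * (exp (2*y) - 1)) \<le> (2*y)^2/8"
      by (rule Hoeffdings_lemma_aux) (use that in auto)
    hence "ln (1 + (1/2) * (exp (2*y) - 1)) \<le> y + y^2/2"
      by (simp add: power2_eq_square)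
    moreover have pos: "1 + (1/2) * (exp (2*y) - 1) > 0"
    proof -
      have "exp (2*y) > 0" by simp
      then show ?thesis by (simp add: algebra_simps add_pos_pos)
    qed
    ultimately have "1 + (1/2) * (exp (2*y) - 1) \<le> exp (y + y^2/2)"
      by (metis exp_le_cancel_iff exp_ln)
    hence "(exp y * exp y + 1) / 2 \<le> exp y * exp (y^2/2)"
      by (simp add: exp_add[symmetric] algebra_simps)
    hence "exp y + 1 / exp y \<le> 2 * exp (y^2/2)"
      by (simp add: field_simps)
    thus ?thesis by (simp add: exp_minus inverse_eq_divide)
  qed
  show ?thesis
  proof (cases "x \<ge> 0")
    case True then show ?thesis using aux by blast
  next
    case False then show ?thesis using aux[of "-x"] by simp
  qed
qed

lemma SG_exp: "(\<Sum>s\<in>SG n. exp (ip n s u)) \<le> 2^n * exp ((\<Sum>i<n. u i ^ 2) / 2)"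
proof (induction n arbitrary: u)
  case 0 then show ?case by (simp add: ip_def)
next
  case (Suc n)
  let ?u = "\<lambda>i. u (Suc i)"
  have "(\<Sum>s\<in>SG (Suc n). exp (ip (Suc n) s u)) = (\<Sum>s\<in>SG n. exp (u 0) * exp (ip n s ?u)) + (\<Sum>s\<in>SG n. exp (-u 0) * exp (ip n s ?u))"
    unfolding sum_SG_Suc ip_Cons by (intro arg_cong2[where f="(+)"] sum.cong) (simp_all add: exp_add exp_diff exp_minus field_simps)
  also have "\<dots> = (exp (u 0) + exp (-u 0)) * (\<Sum>s\<in>SG n. exp (ip n s ?u))"
    by (simp add: sum_distrib_left[symmetric] algebra_simps)
  also have "\<dots> \<le> (2 * exp (u 0 ^2/2)) * (2^n * exp ((\<Sum>i<n. ?u i ^ 2) / 2))"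
    by (intro mult_mono cosh_bound Suc) (auto intro: sum_nonneg)
  also have "\<dots> = 2^Suc n * exp ((\<Sum>i<Suc n. u i ^ 2) / 2)"
    unfolding sum_Suc_shift by (simp add: exp_add[symmetric] add_divide_distrib)
  finally show ?case .
qed




lemma inv_ge: assumes "x \<le> ennreal e" "e > 0" shows "ennreal (1/e) \<le> inverse x"
proof (cases x rule: ennreal_cases)
  case (real r)
  show ?thesis
  proof (cases "r = 0")
    case True then show ?thesis using real by simp
  next
    case False
    with real have "r > 0" by simp
    moreover have "r \<le> e" using assms real by (simp add: ennreal_le_iff2) 
    ultimately show ?thesis using real assms
      by (simp add: inverse_ennreal inverse_eq_divide frac_le ennreal_leI)
  qed
next
  case top then show ?thesis using assms by (metis ennreal_neq_top top.extremum_uniqueI)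
qed

lemma inv_le: assumes "ennreal e \<le> x" "e > 0" shows "inverse x \<le> ennreal (1/e)"
proof (cases x rule: ennreal_cases)
  case (real r)
  have "r \<ge> e" using assms real by simp
  with assms real show ?thesis
    by (simp add: inverse_ennreal inverse_eq_divide frac_le ennreal_leI)
next
  case top then show ?thesis by simp
qed

lemma space_vecs: "space (vecs d) = PiE {..<d} (\<lambda>_. UNIV)"
  unfolding vecs_def by (simp add: space_PiM)

lemma meas_comp[measurable]: "i < d \<Longrightarrow> (\<lambda>x. x i) \<in> borel_measurable (vecs d)"
  unfolding vecs_def by (rule measurable_component_singleton) auto

lemma meas_inner[measurable]: "(\<lambda>x. inner_d d \<theta> x) \<in> borel_measurable (vecs d)"
  unfolding inner_d_def by (auto intro!: borel_measurable_sum borel_measurable_times)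

lemma meas_inner'[measurable]: "(\<lambda>x. inner_d d x \<theta>) \<in> borel_measurable (vecs d)"
  unfolding inner_d_def by (auto intro!: borel_measurable_sum borel_measurable_times)

lemma meas_norm[measurable]: "(\<lambda>x. norm_d d x) \<in> borel_measurable (vecs d)"
  unfolding norm_d_def by (auto intro!: borel_measurable_sum borel_measurable_power)

lemma ball_sets: "{x \<in> space (vecs d). norm_d d x \<le> 1} \<in> sets (vecs d)"
  by measurable

definition us :: "nat \<Rightarrow> real list \<Rightarrow> (nat \<Rightarrow> real)" where
  "us d s = restrict (\<lambda>i. s!i / sqrt d) {..<d}"

lemma SG_nth: "s \<in> SG d \<Longrightarrow> i < d \<Longrightarrow> s!i = 1 \<or> s!i = -1"
  unfolding LL_def using nth_mem by fastforce

lemma SG_nth_sq: "s \<in> SG d \<Longrightarrow> i < d \<Longrightarrow> (s!i)^2 = 1"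
  using SG_nth by fastforce

lemma us_space: "us d s \<in> space (vecs d)"
  unfolding us_def space_vecs by auto

lemma inner_us: "inner_d d \<theta> (us d s) = ip d s \<theta> / sqrt d"
  unfolding inner_d_def ip_def us_def by (simp add: sum_divide_distrib algebra_simps)

lemma inner_us_us: assumes "s \<in> SG d" "d \<ge> 1" shows "inner_d d (us d s) (us d s) = 1"
proof -
  have "inner_d d (us d s) (us d s) = (\<Sum>i<d. (s!i)^2 / d)"
    unfolding inner_d_def us_def by (intro sum.cong) (auto simp: power2_eq_square)
  also have "\<dots> = (\<Sum>i<d. 1 / d)" using SG_nth_sq[OF assms(1)] by (intro sum.cong) auto
  also have "\<dots> = 1" using assms by simp
  finally show ?thesis .
qed

lemma norm_us: assumes "s \<in> SG d" "d \<ge> 1" shows "norm_d d (us d s) = 1"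
proof -
  have "(\<Sum>i<d. (us d s i)^2) = inner_d d (us d s) (us d s)"
    unfolding inner_d_def by (simp add: power2_eq_square)
  then show ?thesis unfolding norm_d_def using inner_us_us[OF assms] by simp
qed

lemma ip_scale: "ip d s (\<lambda>i. L * \<theta> i) = L * ip d s \<theta>"
  unfolding ip_def by (simp add: sum_distrib_left algebra_simps)

lemma meas_ip[measurable]: "(\<lambda>x. ip d s x) \<in> borel_measurable (vecs d)"
  unfolding ip_def by (auto intro!: borel_measurable_sum borel_measurable_times)

lemma count_bound:
  assumes "norm_d d \<theta> \<le> 1"
  shows "(\<Sum>s\<in>SG d. (if sqrt d / 2 \<le> ip d s \<theta> then 1 else 0::real)) \<le> 2^d * exp (- real d / 8)"
proof -
  define L where "L = sqrt d / 2"
  have L0: "L \<ge> 0" unfolding L_def by simp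
  have sq: "(\<Sum>i<d. (\<theta> i)^2) \<le> 1" using assms unfolding norm_d_def by (simp add: real_sqrt_le_1_iff)
  have "(\<Sum>s\<in>SG d. (if sqrt d / 2 \<le> ip d s \<theta> then 1 else 0::real)) \<le>
      (\<Sum>s\<in>SG d. exp (- L * L) * exp (ip d s (\<lambda>i. L * \<theta> i)))"
  proof (intro sum_mono)
    fix s assume "s \<in> SG d"
    have "exp (- L * L) * exp (ip d s (\<lambda>i. L * \<theta> i)) = exp (L * (ip d s \<theta> - L))"
      by (simp add: ip_scale exp_add[symmetric] algebra_simps)
    moreover have "sqrt d / 2 \<le> ip d s \<theta> \<Longrightarrow> 1 \<le> exp (L * (ip d s \<theta> - L))"
      using L0 unfolding L_def by simp
    ultimately show "(if sqrt d / 2 \<le> ip d s \<theta> then 1 else 0::real) \<le> exp (- L * L) * exp (ip d s (\<lambda>i. L * \<theta> i))"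
      by auto
  qed
  also have "\<dots> = exp (- L * L) * (\<Sum>s\<in>SG d. exp (ip d s (\<lambda>i. L * \<theta> i)))"
    by (simp add: sum_distrib_left)
  also have "\<dots> \<le> exp (- L * L) * (2^d * exp ((\<Sum>i<d. (L * \<theta> i) ^ 2) / 2))"
    by (intro mult_left_mono SG_exp) auto
  also have "(\<Sum>i<d. (L * \<theta> i) ^ 2) = L^2 * (\<Sum>i<d. (\<theta> i)^2)"
    by (simp add: sum_distrib_left power_mult_distrib)
  also have "exp (- L * L) * (2^d * exp (L^2 * (\<Sum>i<d. (\<theta> i)^2) / 2)) \<le> exp (- L * L) * (2^d * exp (L^2 / 2))"
    using sq L0 by (intro mult_left_mono) (auto simp: mult_left_le)
  also have "\<dots> = 2^d * exp (- real d / 8)"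
  proof -
    have "L^2 = d / 4" unfolding L_def by (simp add: power_divide)
    hence "- L * L + L^2/2 = - real d / 8" by (simp add: power2_eq_square)
    thus ?thesis by (simp add: exp_add[symmetric] algebra_simps)
  qed
  finally show ?thesis .
qed

lemma SG_nonempty: "SG d \<noteq> {}"
proof -
  have "replicate d 1 \<in> SG d" unfolding LL_def by auto
  thus ?thesis by blast
qed

lemma return_in_X:
  assumes "s \<in> SG d" "d \<ge> 1"
  shows "return (vecs d) (us d s) \<in> dists_X d"
  unfolding dists_X_def using prob_space_return[OF us_space] ball_sets norm_us[OF assms]
  by (simp add: us_space)

lemma close_return:
  assumes "s \<in> SG d" "d \<ge> 1" "\<theta> \<in> close_set d (return (vecs d) (us d s)) (us d s) \<Delta>" "\<Delta> \<le> 1/2"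
  shows "\<theta> \<in> space (vecs d) \<and> sqrt d / 2 \<le> ip d s \<theta>"
proof -
  have sp: "\<theta> \<in> space (vecs d)" using assms(3) unfolding close_set_def by auto
  have "(\<integral>\<^sup>+ x. ennreal \<bar>inner_d d \<theta> x - inner_d d (us d s) x\<bar> \<partial>return (vecs d) (us d s))
     = ennreal \<bar>inner_d d \<theta> (us d s) - inner_d d (us d s) (us d s)\<bar>"
    by (rule nn_integral_return[OF us_space]) measurable
  hence "ennreal \<bar>ip d s \<theta> / sqrt d - 1\<bar> \<le> ennreal \<Delta>"
    using assms(3) unfolding close_set_def by (simp add: inner_us_us[OF assms(1,2)] inner_us[of d \<theta> s])
  hence "\<bar>ip d s \<theta> / sqrt d - 1\<bar> \<le> 1/2"
    using assms(4) by (auto simp: ennreal_le_iff2)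
  hence "ip d s \<theta> / sqrt d \<ge> 1/2" by linarith
  moreover have "sqrt d > 0" using assms by simp
  ultimately have "ip d s \<theta> \<ge> sqrt d / 2" by (simp add: field_simps)
  with sp show ?thesis by simp
qed

lemma part1:
  assumes d: "d \<ge> 1" and \<Delta>: "0 < \<Delta>" "\<Delta> \<le> 1/2"
  shows "ennreal (exp (real d / 8)) \<le> N_frac d (unit_pred d) (unit_pred d) \<Delta>"
  unfolding N_frac_def
proof (rule INF_greatest)
  fix p assume p: "p \<in> dists_class d (unit_pred d)"
  then interpret prob_space p unfolding dists_class_def by auto
  have sp: "sets p = sets (vecs d)" using p unfolding dists_class_def by auto
  have spc: "space p = space (vecs d)" using sets_eq_imp_space_eq[OF sp] .
  define D where "D s = {\<theta> \<in> space (vecs d). sqrt d / 2 \<le> ip d s \<theta>}" for s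
  have Dm: "D s \<in> sets p" for s unfolding sp D_def by measurable
  have U: "{\<theta> \<in> space (vecs d). unit_pred d \<theta>} \<in> sets p"
    unfolding sp unit_pred_def by measurable
  have AEU: "AE \<theta> in p. unit_pred d \<theta>"
  proof -
    have "emeasure p {\<theta> \<in> space (vecs d). unit_pred d \<theta>} = 1"
      using p unfolding dists_class_def by auto
    hence "prob {\<theta> \<in> space (vecs d). unit_pred d \<theta>} = 1" by (simp add: emeasure_eq_measure)
    from AE_prob_1[OF this] show ?thesis by auto
  qed
  have "(\<Sum>s\<in>SG d. emeasure p (D s)) = (\<Sum>s\<in>SG d. \<integral>\<^sup>+ \<theta>. indicator (D s) \<theta> \<partial>p)"
    using Dm by simp
  also have "\<dots> = (\<integral>\<^sup>+ \<theta>. (\<Sum>s\<in>SG d. indicator (D s) \<theta>) \<partial>p)"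
    by (rule nn_integral_sum[symmetric]) (use Dm in auto)
  also have "\<dots> \<le> (\<integral>\<^sup>+ \<theta>. ennreal (2^d * exp (- real d / 8)) \<partial>p)"
  proof (rule nn_integral_mono_AE)
    show "AE \<theta> in p. (\<Sum>s\<in>SG d. indicator (D s) \<theta>) \<le> ennreal (2^d * exp (- real d / 8))"
      using AEU
    proof (rule AE_mp)
      show "AE \<theta> in p. unit_pred d \<theta> \<longrightarrow> (\<Sum>s\<in>SG d. indicator (D s) \<theta>) \<le> ennreal (2^d * exp (- real d / 8))"
      proof (rule AE_I2, rule impI)
        fix \<theta> assume th: "\<theta> \<in> space p" "unit_pred d \<theta>"
        have "(\<Sum>s\<in>SG d. indicator (D s) \<theta> :: ennreal) = (\<Sum>s\<in>SG d. ennreal (if sqrt d / 2 \<le> ip d s \<theta> then 1 else 0))"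
          using th spc unfolding D_def by (intro sum.cong) (auto simp: indicator_def)
        also have "\<dots> = ennreal (\<Sum>s\<in>SG d. (if sqrt d / 2 \<le> ip d s \<theta> then 1 else 0))"
          by (rule sum_ennreal) auto
        also have "\<dots> \<le> ennreal (2^d * exp (- real d / 8))"
          using count_bound[of d \<theta>] th unfolding unit_pred_def by (intro ennreal_leI) auto
        finally show "(\<Sum>s\<in>SG d. indicator (D s) \<theta>) \<le> ennreal (2^d * exp (- real d / 8))" .
      qed
    qed
  qed
  also have "\<dots> = ennreal (2^d * exp (- real d / 8))"
    by (simp add: emeasure_space_1)
  finally have sumle: "(\<Sum>s\<in>SG d. emeasure p (D s)) \<le> ennreal (2^d * exp (- real d / 8))" .
  have "(\<Sum>s\<in>SG d. emeasure p (D s)) = ennreal (\<Sum>s\<in>SG d. prob (D s))"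
    by (simp add: emeasure_eq_measure sum_ennreal)
  with sumle have sumle': "(\<Sum>s\<in>SG d. prob (D s)) \<le> 2^d * exp (- real d / 8)"
    by (simp add: ennreal_le_iff)
  obtain s where s: "s \<in> SG d" "prob (D s) \<le> exp (- real d / 8)"
  proof (rule ccontr)
    assume "\<not> thesis"
    with that have "\<forall>s\<in>SG d. exp (- real d / 8) < prob (D s)" by force
    hence "(\<Sum>s\<in>SG d. exp (- real d / 8)) < (\<Sum>s\<in>SG d. prob (D s))"
      by (intro sum_strict_mono) (auto simp: LL_finite SG_nonempty)
    with sumle' show False by (simp add: SG_card)
  qed
  let ?\<mu> = "return (vecs d) (us d s)"
  have mem: "(?\<mu>, us d s) \<in> dists_X d \<times> {\<theta> \<in> space (vecs d). unit_pred d \<theta>}"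
    using return_in_X[OF s(1) d] us_space norm_us[OF s(1) d] unfolding unit_pred_def by auto
  have "close_set d ?\<mu> (us d s) \<Delta> \<subseteq> D s"
    using close_return[OF s(1) d _ \<Delta>(2)] unfolding D_def by blast
  hence "emeasure p (close_set d ?\<mu> (us d s) \<Delta>) \<le> emeasure p (D s)"
    by (rule emeasure_mono) (rule Dm)
  also have "\<dots> \<le> ennreal (exp (- real d / 8))"
    using s(2) by (simp add: emeasure_eq_measure)
  finally have "ennreal (1 / exp (- real d / 8)) \<le> inverse (emeasure p (close_set d ?\<mu> (us d s) \<Delta>))"
    by (rule inv_ge) simp
  hence "ennreal (exp (real d / 8)) \<le> inverse (emeasure p (close_set d ?\<mu> (us d s) \<Delta>))"
    by (simp add: exp_minus inverse_eq_divide)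
  also have "\<dots> \<le> (SUP (\<mu>, \<theta>s) \<in> dists_X d \<times> {\<theta> \<in> space (vecs d). unit_pred d \<theta>}.
        inverse (emeasure p (close_set d \<mu> \<theta>s \<Delta>)))"
    using mem by (rule SUP_upper2) simp
  finally show "ennreal (exp (real d / 8)) \<le> (SUP (\<mu>, \<theta>s) \<in> dists_X d \<times> {\<theta> \<in> space (vecs d). unit_pred d \<theta>}.
        inverse (emeasure p (close_set d \<mu> \<theta>s \<Delta>)))" .
qed




lemma SL1:
  fixes F :: "'a \<Rightarrow> real"
  assumes "finite S"
  shows "(\<Sum>gs\<in>LL k S. \<Sum>j<k. F (gs!j)) * card S = k * card S ^ k * (\<Sum>g\<in>S. F g :: real)"
proof (induction k)
  case 0 then show ?case by simp
next
  case (Suc k)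
  have "(\<Sum>gs\<in>LL (Suc k) S. \<Sum>j<Suc k. F (gs!j)) = (\<Sum>a\<in>S. \<Sum>gs\<in>LL k S. F a + (\<Sum>j<k. F (gs!j)))"
    unfolding sum_LL_Suc[OF assms] sum_Suc_shift by simp
  also have "\<dots> = card S ^ k * (\<Sum>a\<in>S. F a) + card S * (\<Sum>gs\<in>LL k S. \<Sum>j<k. F (gs!j))"
    by (simp add: sum.distrib LL_card[OF assms] sum_distrib_left)
  finally show ?case using Suc by (simp add: algebra_simps)
qed

lemma SL2:
  fixes Y :: "'a \<Rightarrow> real"
  assumes "finite S" "(\<Sum>g\<in>S. Y g) = (0::real)"
  shows "(\<Sum>gs\<in>LL k S. (\<Sum>j<k. Y (gs!j))^2) * card S = k * card S ^ k * (\<Sum>g\<in>S. (Y g)^2)"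
proof (induction k)
  case 0 then show ?case by simp
next
  case (Suc k)
  define T where "T gs = (\<Sum>j<k. Y (gs!j))" for gs
  have "(\<Sum>gs\<in>LL (Suc k) S. (\<Sum>j<Suc k. Y (gs!j))^2) =
      (\<Sum>a\<in>S. \<Sum>gs\<in>LL k S. (Y a)^2 + 2 * Y a * T gs + (T gs)^2)"
    unfolding sum_LL_Suc[OF assms(1)] sum_Suc_shift T_def by (intro sum.cong refl) (simp add: power2_eq_square algebra_simps)
  also have "\<dots> = card S ^ k * (\<Sum>a\<in>S. (Y a)^2) + 2 * (\<Sum>a\<in>S. Y a) * (\<Sum>gs\<in>LL k S. T gs)
       + card S * (\<Sum>gs\<in>LL k S. (T gs)^2)"
    by (simp add: sum.distrib LL_card[OF assms(1)] sum_distrib_left sum_distrib_right algebra_simps)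
  finally show ?case using Suc assms(2) by (simp add: algebra_simps T_def)
qed

lemma markov_count:
  assumes "finite A" "\<And>x. x \<in> A \<Longrightarrow> f x \<ge> 0" "t > 0"
  shows "real (card {x\<in>A. t < f x}) * t \<le> (\<Sum>x\<in>A. f x :: real)"
proof -
  have "real (card {x\<in>A. t < f x}) * t = (\<Sum>x\<in>{x\<in>A. t < f x}. t)" by simp
  also have "\<dots> \<le> (\<Sum>x\<in>{x\<in>A. t < f x}. f x)" by (intro sum_mono) auto
  also have "\<dots> \<le> (\<Sum>x\<in>A. f x)" using assms by (intro sum_mono2) auto
  finally show ?thesis .
qed

lemma markov_count_enn:
  assumes "finite A" "t > 0"
  shows "of_nat (card {x\<in>A. ennreal t < f x}) * ennreal t \<le> (\<Sum>x\<in>A. f x :: ennreal)"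
proof -
  have "of_nat (card {x\<in>A. ennreal t < f x}) * ennreal t = (\<Sum>x\<in>{x\<in>A. ennreal t < f x}. ennreal t)" by simp
  also have "\<dots> \<le> (\<Sum>x\<in>{x\<in>A. ennreal t < f x}. f x)" by (intro sum_mono) auto
  also have "\<dots> \<le> (\<Sum>x\<in>A. f x)" using assms by (intro sum_mono2) auto
  finally show ?thesis .
qed

lemma amgm_abs: assumes "\<eta> > 0" shows "\<bar>t::real\<bar> \<le> (\<eta> + t^2 / \<eta>) / 2"
proof -
  have "0 \<le> (\<bar>t\<bar> - \<eta>)^2" by simp
  hence "2 * \<eta> * \<bar>t\<bar> \<le> \<eta>^2 + t^2" by (simp add: power2_eq_square algebra_simps)
  thus ?thesis using assms by (simp add: field_simps power2_eq_square)
qed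

lemma cs_le1:
  assumes "(\<Sum>i<d. (u i)^2) \<le> 1" "(\<Sum>i<d. (v i)^2) \<le> 1"
  shows "\<bar>\<Sum>i<d. u i * v i\<bar> \<le> (1::real)"
proof -
  have "\<bar>\<Sum>i<d. u i * v i\<bar> \<le> (\<Sum>i<d. \<bar>u i * v i\<bar>)" by (rule sum_abs)
  also have "\<dots> \<le> (\<Sum>i<d. ((u i)^2 + (v i)^2) / 2)"
  proof (intro sum_mono)
    fix i
    have "0 \<le> (\<bar>u i\<bar> - \<bar>v i\<bar>)^2" by simp
    thus "\<bar>u i * v i\<bar> \<le> ((u i)^2 + (v i)^2) / 2"
      by (simp add: power2_eq_square algebra_simps abs_mult)
  qed
  also have "\<dots> = ((\<Sum>i<d. (u i)^2) + (\<Sum>i<d. (v i)^2)) / 2"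
    by (simp only: sum_divide_distrib[symmetric] sum.distrib)
  also have "\<dots> \<le> 1" using assms by simp
  finally show ?thesis .
qed

lemma Ysum: "(\<Sum>g\<in>SG d. ip d g u * ip d g v - inner_d d u v) = 0"
  by (simp add: sum_subtractf SG_mom2 SG_card inner_d_def)

lemma Ysq:
  assumes "(\<Sum>i<d. (u i)^2) \<le> 1" "(\<Sum>i<d. (v i)^2) \<le> 1"
  shows "(\<Sum>g\<in>SG d. (ip d g u * ip d g v - inner_d d u v)^2) \<le> 2 * 2^d"
proof -
  define c where "c = inner_d d u v"
  have c1: "\<bar>c\<bar> \<le> 1" unfolding c_def inner_d_def by (rule cs_le1[OF assms])
  have "(\<Sum>g\<in>SG d. (ip d g u * ip d g v - c)^2) =
     (\<Sum>g\<in>SG d. (ip d g u)^2 * (ip d g v)^2) - 2 * c * (\<Sum>g\<in>SG d. ip d g u * ip d g v) + 2^d * c^2"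
  proof -
    have "(\<Sum>g\<in>SG d. (ip d g u * ip d g v - c)^2) = (\<Sum>g\<in>SG d. (ip d g u)^2 * (ip d g v)^2 - (2 * c) * (ip d g u * ip d g v) + c^2)"
      by (intro sum.cong refl) (simp add: power2_eq_square algebra_simps)
    also have "\<dots> = (\<Sum>g\<in>SG d. (ip d g u)^2 * (ip d g v)^2) - (\<Sum>g\<in>SG d. (2 * c) * (ip d g u * ip d g v)) + (\<Sum>g\<in>SG d. c^2)"
      by (simp only: sum.distrib sum_subtractf)
    also have "\<dots> = (\<Sum>g\<in>SG d. (ip d g u)^2 * (ip d g v)^2) - 2 * c * (\<Sum>g\<in>SG d. ip d g u * ip d g v) + 2^d * c^2"
      by (simp only: sum_distrib_left[symmetric] sum_constant SG_card of_nat_power of_nat_numeral mult.assoc)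
    finally show ?thesis .
  qed
  also have "\<dots> \<le> 2^d * ((\<Sum>i<d. u i ^ 2) * (\<Sum>i<d. v i ^ 2) + 2 * c^2) - 2 * c * (2^d * c) + 2^d * c^2"
    using SG_mom4[of d u v] by (simp add: SG_mom2 c_def inner_d_def)
  also have "\<dots> = 2^d * ((\<Sum>i<d. u i ^ 2) * (\<Sum>i<d. v i ^ 2) + c^2)"
    by (simp add: algebra_simps power2_eq_square)
  also have "\<dots> \<le> 2^d * (1 + 1)"
  proof -
    have "(\<Sum>i<d. u i ^ 2) * (\<Sum>i<d. v i ^ 2) \<le> 1 * 1"
      using assms by (intro mult_mono) (auto intro: sum_nonneg)
    moreover have "c^2 \<le> 1" using c1 by (simp add: abs_square_le_1)
    ultimately show ?thesis by simp
  qed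
  finally show ?thesis unfolding c_def by simp
qed

lemma babs:
  assumes "(\<Sum>i<d. (v i)^2) \<le> 1"
  shows "(\<Sum>g\<in>SG d. \<bar>ip d g v\<bar>) \<le> 2^d"
proof -
  have "(\<Sum>g\<in>SG d. \<bar>ip d g v\<bar>) \<le> (\<Sum>g\<in>SG d. (1 + (ip d g v)^2) / 2)"
    by (intro sum_mono) (use amgm_abs[of 1] in auto)
  also have "\<dots> = (2^d + 2^d * (\<Sum>i<d. (v i)^2)) / 2"
    by (simp add: sum.distrib sum_divide_distrib[symmetric] SG_mom2' SG_card)
  also have "\<dots> \<le> 2^d" using assms by simp
  finally show ?thesis .
qed

lemma meas_pair_inner:
  "(\<lambda>y. inner_d d (fst y) (snd y)) \<in> borel_measurable (vecs d \<Otimes>\<^sub>M vecs d)"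
  unfolding inner_d_def
proof (rule borel_measurable_sum)
  fix i assume i: "i \<in> {..<d}"
  have a: "(\<lambda>y. fst y i) \<in> borel_measurable (vecs d \<Otimes>\<^sub>M vecs d)"
    using measurable_compose[OF measurable_fst meas_comp[of i d]] i by (simp add: comp_def)
  have b: "(\<lambda>y. snd y i) \<in> borel_measurable (vecs d \<Otimes>\<^sub>M vecs d)"
    using measurable_compose[OF measurable_snd meas_comp[of i d]] i by (simp add: comp_def)
  show "(\<lambda>y. fst y i * snd y i) \<in> borel_measurable (vecs d \<Otimes>\<^sub>M vecs d)"
    by (rule borel_measurable_times[OF a b])
qed

lemma close_meas:
  assumes "\<mu> \<in> dists_X d"
  shows "close_set d \<mu> \<theta>s \<Delta> \<in> sets (vecs d)"
proof -
  interpret prob_space \<mu> using assms unfolding dists_X_def by auto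
  have sm: "sets \<mu> = sets (vecs d)" using assms unfolding dists_X_def by auto
  have f0: "(\<lambda>y. ennreal \<bar>inner_d d (fst y) (snd y) - inner_d d \<theta>s (snd y)\<bar>) \<in> borel_measurable (vecs d \<Otimes>\<^sub>M vecs d)"
  proof -
    have a: "(\<lambda>y. inner_d d \<theta>s (snd y)) \<in> borel_measurable (vecs d \<Otimes>\<^sub>M vecs d)"
      using measurable_compose[OF measurable_snd meas_inner] by (simp add: comp_def)
    show ?thesis
      by (rule measurable_compose[OF _ measurable_ennreal], rule borel_measurable_abs,
          rule borel_measurable_diff[OF meas_pair_inner a])
  qed
  have f: "(\<lambda>(\<theta>, x). ennreal \<bar>inner_d d \<theta> x - inner_d d \<theta>s x\<bar>) \<in> borel_measurable (vecs d \<Otimes>\<^sub>M \<mu>)"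
  proof -
    have "sets (vecs d \<Otimes>\<^sub>M \<mu>) = sets (vecs d \<Otimes>\<^sub>M vecs d)"
      by (rule sets_pair_measure_cong) (auto simp: sm)
    note eq = this
    have "(\<lambda>y. ennreal \<bar>inner_d d (fst y) (snd y) - inner_d d \<theta>s (snd y)\<bar>) \<in> borel_measurable (vecs d \<Otimes>\<^sub>M \<mu>)"
      using f0 unfolding measurable_cong_sets[OF eq refl] .
    then show ?thesis unfolding case_prod_beta' .
  qed
  have F: "(\<lambda>\<theta>. \<integral>\<^sup>+ x. ennreal \<bar>inner_d d \<theta> x - inner_d d \<theta>s x\<bar> \<partial>\<mu>) \<in> borel_measurable (vecs d)"
    using borel_measurable_nn_integral[OF f] by simp
  have "close_set d \<mu> \<theta>s \<Delta> = (\<lambda>\<theta>. \<integral>\<^sup>+ x. ennreal \<bar>inner_d d \<theta> x - inner_d d \<theta>s x\<bar> \<partial>\<mu>) -` {..ennreal \<Delta>} \<inter> space (vecs d)"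
    unfolding close_set_def by auto
  also have "\<dots> \<in> sets (vecs d)"
    by (rule measurable_sets[OF F]) simp
  finally show ?thesis .
qed




definition kk :: "real \<Rightarrow> nat" where "kk \<Delta> = nat \<lceil>192 / \<Delta>^2\<rceil>"
definition NN :: "real \<Rightarrow> nat" where "NN \<Delta> = nat \<lceil>2 * sqrt (kk \<Delta>) / (\<Delta>/8)\<rceil>"
definition WW :: "real \<Rightarrow> int set" where "WW \<Delta> = {- int (NN \<Delta>) .. int (NN \<Delta>)}"
definition Om :: "nat \<Rightarrow> real \<Rightarrow> (real list list \<times> int list) set" where
  "Om d \<Delta> = LL (kk \<Delta>) (SG d) \<times> LL (kk \<Delta>) (WW \<Delta>)"
definition Phi :: "nat \<Rightarrow> real \<Rightarrow> real list list \<times> int list \<Rightarrow> (nat \<Rightarrow> real)" where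
  "Phi d \<Delta> \<omega> = restrict (\<lambda>i. (\<Delta>/8) / kk \<Delta> * (\<Sum>j<kk \<Delta>. of_int (snd \<omega> ! j) * (fst \<omega> ! j) ! i)) {..<d}"
definition pp :: "nat \<Rightarrow> real \<Rightarrow> (nat \<Rightarrow> real) measure" where
  "pp d \<Delta> = distr (measure_pmf (pmf_of_set (Om d \<Delta>))) (vecs d) (Phi d \<Delta>)"

lemma kk_ge: "0 < \<Delta> \<Longrightarrow> real (kk \<Delta>) \<ge> 192 / \<Delta>^2"
  unfolding kk_def by linarith

lemma kk_pos: "0 < \<Delta> \<Longrightarrow> kk \<Delta> \<ge> 1"
proof -
  assume "0 < \<Delta>"
  hence "real (kk \<Delta>) > 0" using kk_ge[of \<Delta>] by (smt (verit) divide_pos_pos zero_less_power)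
  thus ?thesis by simp
qed

lemma WW_card: "card (WW \<Delta>) = 2 * NN \<Delta> + 1"
  unfolding WW_def by simp

lemma Om_finite: "finite (Om d \<Delta>)"
  unfolding Om_def WW_def by (intro finite_cartesian_product LL_finite) auto

lemma Om_card: "card (Om d \<Delta>) = (2^d)^kk \<Delta> * (2 * NN \<Delta> + 1)^kk \<Delta>"
proof -
  have fw: "finite (WW \<Delta>)" unfolding WW_def by simp
  have fs: "finite (SG d)" by (rule LL_finite) simp
  have c1: "card (LL (kk \<Delta>) (SG d)) = (2^d)^kk \<Delta>" by (simp only: LL_card[OF fs] SG_card)
  have c2: "card (LL (kk \<Delta>) (WW \<Delta>)) = (2 * NN \<Delta> + 1)^kk \<Delta>" by (simp only: LL_card[OF fw] WW_card)
  show ?thesis unfolding Om_def card_cartesian_product c1 c2 ..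
qed

lemma Om_ne: "Om d \<Delta> \<noteq> {}"
  using Om_card[of d \<Delta>] by auto

lemma Phi_space: "Phi d \<Delta> \<omega> \<in> space (vecs d)"
  unfolding Phi_def space_vecs by auto

lemma inner_Phi: "inner_d d (Phi d \<Delta> \<omega>) x = (\<Delta>/8) / kk \<Delta> * (\<Sum>j<kk \<Delta>. of_int (snd \<omega> ! j) * ip d (fst \<omega> ! j) x)"
  unfolding inner_d_def Phi_def ip_def
  by (simp add: sum_distrib_left sum_distrib_right algebra_simps) (rule sum.swap)

lemma pp_class: "pp d \<Delta> \<in> dists_class d (\<lambda>_. True)"
proof -
  have m: "Phi d \<Delta> \<in> measurable (measure_pmf (pmf_of_set (Om d \<Delta>))) (vecs d)"
    using Phi_space by simp
  have "prob_space (pp d \<Delta>)" unfolding pp_def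
    by (rule prob_space.prob_space_distr[OF _ m]) (rule prob_space_measure_pmf)
  moreover have "emeasure (pp d \<Delta>) (space (vecs d)) = 1"
    using \<open>prob_space (pp d \<Delta>)\<close> unfolding pp_def by (simp add: prob_space.emeasure_space_1[of "distr _ _ _", simplified])
  ultimately show ?thesis unfolding dists_class_def pp_def by simp
qed

lemma emeasure_pp:
  assumes "A \<in> sets (vecs d)"
  shows "emeasure (pp d \<Delta>) A = ennreal (real (card {\<omega>\<in>Om d \<Delta>. Phi d \<Delta> \<omega> \<in> A}) / real (card (Om d \<Delta>)))"
proof -
  have m: "Phi d \<Delta> \<in> measurable (measure_pmf (pmf_of_set (Om d \<Delta>))) (vecs d)"
    using Phi_space by simp
  have "emeasure (pp d \<Delta>) A = emeasure (measure_pmf (pmf_of_set (Om d \<Delta>))) (Phi d \<Delta> -` A)"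
    unfolding pp_def by (simp add: emeasure_distr[OF m assms])
  also have "\<dots> = ennreal (real (card (Om d \<Delta> \<inter> Phi d \<Delta> -` A)) / real (card (Om d \<Delta>)))"
    using emeasure_pmf_of_set[OF Om_ne Om_finite, where A="Phi d \<Delta> -` A"] by simp
  also have "Om d \<Delta> \<inter> Phi d \<Delta> -` A = {\<omega>\<in>Om d \<Delta>. Phi d \<Delta> \<omega> \<in> A}" by auto
  finally show ?thesis .
qed

lemma norm_sq: "norm_d d x \<le> 1 \<Longrightarrow> (\<Sum>i<d. (x i)^2) \<le> 1"
  unfolding norm_d_def by (simp add: real_sqrt_le_1_iff)

lemma X_facts:
  assumes "\<mu> \<in> dists_X d"
  shows "prob_space \<mu>" "sets \<mu> = sets (vecs d)" "AE x in \<mu>. (\<Sum>i<d. (x i)^2) \<le> 1"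
proof -
  show ps: "prob_space \<mu>" using assms unfolding dists_X_def by auto
  show sm: "sets \<mu> = sets (vecs d)" using assms unfolding dists_X_def by auto
  interpret prob_space \<mu> by (rule ps)
  have "emeasure \<mu> {x \<in> space (vecs d). norm_d d x \<le> 1} = 1" using assms unfolding dists_X_def by auto
  hence "measure \<mu> {x \<in> space (vecs d). norm_d d x \<le> 1} = 1"
    using emeasure_eq_measure by simp
  from AE_prob_1[OF this] show "AE x in \<mu>. (\<Sum>i<d. (x i)^2) \<le> 1"
    by (rule AE_mp) (auto intro!: AE_I2 norm_sq)
qed

lemma meas_tr: "sets \<mu> = sets (vecs d) \<Longrightarrow> f \<in> borel_measurable (vecs d) \<Longrightarrow> f \<in> borel_measurable \<mu>"
  using measurable_cong_sets[of \<mu> "vecs d" borel borel] by simp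

definition YY :: "nat \<Rightarrow> (nat \<Rightarrow> real) \<Rightarrow> (nat \<Rightarrow> real) \<Rightarrow> real list \<Rightarrow> real" where
  "YY d \<theta>s x g = ip d g \<theta>s * ip d g x - inner_d d \<theta>s x"

definition I1 where
  "I1 d \<mu> \<theta>s k gs = (\<integral>\<^sup>+ x. ennreal \<bar>(\<Sum>j<k. YY d \<theta>s x (gs!j)) / k\<bar> \<partial>\<mu>)"

definition I2 where
  "I2 d \<mu> \<delta> k gs = (\<integral>\<^sup>+ x. ennreal (\<delta> / k * (\<Sum>j<k. \<bar>ip d (gs!j) x\<bar>)) \<partial>\<mu>)"

lemma meas_YYsum: "(\<lambda>x. ennreal \<bar>(\<Sum>j<k. YY d \<theta>s x (gs!j)) / k\<bar>) \<in> borel_measurable (vecs d)"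
  unfolding YY_def by measurable

lemma meas_I2f: "(\<lambda>x. ennreal (\<delta> / k * (\<Sum>j<k. \<bar>ip d (gs!j) x\<bar>))) \<in> borel_measurable (vecs d)"
  by measurable

lemma fin_G: "finite (LL k (SG d))"
  by (intro LL_finite) simp

lemma card_G: "card (LL k (SG d)) = (2^d)^k"
proof -
  have fs: "finite (SG d)" by (rule LL_finite) simp
  show ?thesis by (simp only: LL_card[OF fs] SG_card)
qed

lemma point1:
  fixes \<eta> :: real
  assumes x: "(\<Sum>i<d. (x i)^2) \<le> 1" and th: "(\<Sum>i<d. (\<theta>s i)^2) \<le> 1"
    and k: "k \<ge> 1" and \<eta>: "\<eta> > 0" "k * \<eta>^2 \<ge> 2"
  shows "(\<Sum>gs\<in>LL k (SG d). \<bar>(\<Sum>j<k. YY d \<theta>s x (gs!j)) / k\<bar>) \<le> (2^d)^k * \<eta>"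
proof -
  define C :: real where "C = (2^d)^k"
  define T where "T gs = (\<Sum>j<k. YY d \<theta>s x (gs!j))" for gs
  have sY: "(\<Sum>g\<in>SG d. YY d \<theta>s x g) = 0" unfolding YY_def by (rule Ysum)
  have qY: "(\<Sum>g\<in>SG d. (YY d \<theta>s x g)^2) \<le> 2 * 2^d" unfolding YY_def by (rule Ysq[OF th x])
  have fs: "finite (SG d)" by (rule LL_finite) simp
  have "(\<Sum>gs\<in>LL k (SG d). (T gs)^2) * 2^d = real k * ((2::real)^d)^k * (\<Sum>g\<in>SG d. (YY d \<theta>s x g)^2)"
    using SL2[OF fs sY, of k] unfolding T_def SG_card by simp
  also have "\<dots> \<le> real k * ((2::real)^d)^k * (2 * 2^d)"
    using qY by (intro mult_left_mono) auto
  finally have sT: "(\<Sum>gs\<in>LL k (SG d). (T gs)^2) \<le> 2 * k * C"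
    unfolding C_def by (simp add: algebra_simps)
  have "(\<Sum>gs\<in>LL k (SG d). \<bar>T gs / k\<bar>) \<le> (\<Sum>gs\<in>LL k (SG d). (\<eta> + (T gs / k)^2 / \<eta>) / 2)"
    by (intro sum_mono amgm_abs \<eta>)
  also have "\<dots> = (C * \<eta> + (\<Sum>gs\<in>LL k (SG d). (T gs)^2) / (k^2 * \<eta>)) / 2"
    by (simp add: sum.distrib sum_divide_distrib[symmetric] card_G C_def power_divide)
  also have "\<dots> \<le> (C * \<eta> + (2 * k * C) / (k^2 * \<eta>)) / 2"
    using sT k \<eta> by (intro divide_right_mono add_left_mono) (auto simp: divide_right_mono)
  also have "(2 * k * C) / (k^2 * \<eta>) = C * (2 / (k * \<eta>))"
    using k \<eta> by (simp add: field_simps power2_eq_square)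
  also have "C * (2 / (k * \<eta>)) \<le> C * \<eta>"
  proof -
    have "2 / (k * \<eta>) \<le> \<eta>" using k \<eta> by (simp add: field_simps power2_eq_square)
    thus ?thesis unfolding C_def by (intro mult_left_mono) auto
  qed
  finally show ?thesis unfolding T_def C_def by (simp add: mult.commute)
qed

lemma SL1_SG: "(\<Sum>gs\<in>LL k (SG d). \<Sum>j<k. F (gs!j)) * 2^d = real k * ((2::real)^d)^k * (\<Sum>g\<in>SG d. F g :: real)"
proof -
  have fs: "finite (SG d)" by (rule LL_finite) simp
  show ?thesis using SL1[OF fs, where k=k and F=F] unfolding SG_card by simp
qed

lemma point2:
  fixes \<delta> :: real
  assumes x: "(\<Sum>i<d. (x i)^2) \<le> 1" and k: "k \<ge> 1" and \<delta>: "\<delta> \<ge> 0"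
  shows "(\<Sum>gs\<in>LL k (SG d). \<delta> / k * (\<Sum>j<k. \<bar>ip d (gs!j) x\<bar>)) \<le> (2^d)^k * \<delta>"
proof -
  have "(\<Sum>gs\<in>LL k (SG d). \<Sum>j<k. \<bar>ip d (gs!j) x\<bar>) * 2^d = real k * ((2::real)^d)^k * (\<Sum>g\<in>SG d. \<bar>ip d g x\<bar>)"
    by (rule SL1_SG)
  also have "\<dots> \<le> real k * ((2::real)^d)^k * 2^d"
    using babs[OF x] by (intro mult_left_mono) auto
  finally have "(\<Sum>gs\<in>LL k (SG d). \<Sum>j<k. \<bar>ip d (gs!j) x\<bar>) \<le> real k * ((2::real)^d)^k" by simp
  hence "\<delta> / k * (\<Sum>gs\<in>LL k (SG d). \<Sum>j<k. \<bar>ip d (gs!j) x\<bar>) \<le> \<delta> / k * (real k * ((2::real)^d)^k)"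
    using \<delta> k by (intro mult_left_mono) auto
  thus ?thesis using k by (simp add: sum_distrib_left mult.commute)
qed

lemma pointA:
  assumes th: "(\<Sum>i<d. (\<theta>s i)^2) \<le> 1"
  shows "(\<Sum>gs\<in>LL k (SG d). \<Sum>j<k. (ip d (gs!j) \<theta>s)^2) \<le> real k * ((2::real)^d)^k"
proof -
  have "(\<Sum>gs\<in>LL k (SG d). \<Sum>j<k. (ip d (gs!j) \<theta>s)^2) * 2^d = real k * ((2::real)^d)^k * (\<Sum>g\<in>SG d. (ip d g \<theta>s)^2)"
    by (rule SL1_SG)
  also have "\<dots> \<le> real k * ((2::real)^d)^k * 2^d"
    using th by (intro mult_left_mono) (auto simp: SG_mom2')
  finally show ?thesis by simp
qed

lemma sumI1:
  fixes \<eta> :: real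
  assumes \<mu>: "\<mu> \<in> dists_X d" and th: "(\<Sum>i<d. (\<theta>s i)^2) \<le> 1"
    and k: "k \<ge> 1" and \<eta>: "\<eta> > 0" "k * \<eta>^2 \<ge> 2"
  shows "(\<Sum>gs\<in>LL k (SG d). I1 d \<mu> \<theta>s k gs) \<le> ennreal ((2^d)^k * \<eta>)"
proof -
  note X = X_facts[OF \<mu>]
  interpret prob_space \<mu> by (rule X(1))
  have "(\<Sum>gs\<in>LL k (SG d). I1 d \<mu> \<theta>s k gs) = (\<integral>\<^sup>+ x. (\<Sum>gs\<in>LL k (SG d). ennreal \<bar>(\<Sum>j<k. YY d \<theta>s x (gs!j)) / k\<bar>) \<partial>\<mu>)"
    unfolding I1_def by (rule nn_integral_sum[symmetric]) (rule meas_tr[OF X(2) meas_YYsum])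
  also have "\<dots> \<le> (\<integral>\<^sup>+ x. ennreal ((2^d)^k * \<eta>) \<partial>\<mu>)"
  proof (rule nn_integral_mono_AE)
    show "AE x in \<mu>. (\<Sum>gs\<in>LL k (SG d). ennreal \<bar>(\<Sum>j<k. YY d \<theta>s x (gs!j)) / k\<bar>) \<le> ennreal ((2^d)^k * \<eta>)"
      using X(3)
    proof (rule AE_mp, intro AE_I2 impI)
      fix x :: "nat \<Rightarrow> real" assume x: "(\<Sum>i<d. (x i)^2) \<le> 1"
      have "(\<Sum>gs\<in>LL k (SG d). ennreal \<bar>(\<Sum>j<k. YY d \<theta>s x (gs!j)) / k\<bar>) = ennreal (\<Sum>gs\<in>LL k (SG d). \<bar>(\<Sum>j<k. YY d \<theta>s x (gs!j)) / k\<bar>)"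
        by (rule sum_ennreal) auto
      also have "\<dots> \<le> ennreal ((2^d)^k * \<eta>)"
        by (intro ennreal_leI point1[OF x th k \<eta>])
      finally show "(\<Sum>gs\<in>LL k (SG d). ennreal \<bar>(\<Sum>j<k. YY d \<theta>s x (gs!j)) / k\<bar>) \<le> ennreal ((2^d)^k * \<eta>)" .
    qed
  qed
  also have "\<dots> = ennreal ((2^d)^k * \<eta>)" by (simp add: emeasure_space_1)
  finally show ?thesis .
qed

lemma sumI2:
  fixes \<delta> :: real
  assumes \<mu>: "\<mu> \<in> dists_X d" and k: "k \<ge> 1" and \<delta>: "\<delta> \<ge> 0"
  shows "(\<Sum>gs\<in>LL k (SG d). I2 d \<mu> \<delta> k gs) \<le> ennreal ((2^d)^k * \<delta>)"
proof -
  note X = X_facts[OF \<mu>]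
  interpret prob_space \<mu> by (rule X(1))
  have "(\<Sum>gs\<in>LL k (SG d). I2 d \<mu> \<delta> k gs) = (\<integral>\<^sup>+ x. (\<Sum>gs\<in>LL k (SG d). ennreal (\<delta> / k * (\<Sum>j<k. \<bar>ip d (gs!j) x\<bar>))) \<partial>\<mu>)"
    unfolding I2_def by (rule nn_integral_sum[symmetric]) (rule meas_tr[OF X(2) meas_I2f])
  also have "\<dots> \<le> (\<integral>\<^sup>+ x. ennreal ((2^d)^k * \<delta>) \<partial>\<mu>)"
  proof (rule nn_integral_mono_AE)
    show "AE x in \<mu>. (\<Sum>gs\<in>LL k (SG d). ennreal (\<delta> / k * (\<Sum>j<k. \<bar>ip d (gs!j) x\<bar>))) \<le> ennreal ((2^d)^k * \<delta>)"
      using X(3)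
    proof (rule AE_mp, intro AE_I2 impI)
      fix x :: "nat \<Rightarrow> real" assume x: "(\<Sum>i<d. (x i)^2) \<le> 1"
      have "(\<Sum>gs\<in>LL k (SG d). ennreal (\<delta> / k * (\<Sum>j<k. \<bar>ip d (gs!j) x\<bar>))) = ennreal (\<Sum>gs\<in>LL k (SG d). \<delta> / k * (\<Sum>j<k. \<bar>ip d (gs!j) x\<bar>))"
        by (rule sum_ennreal) (use \<delta> in auto)
      also have "\<dots> \<le> ennreal ((2^d)^k * \<delta>)"
        by (intro ennreal_leI point2[OF x k \<delta>])
      finally show "(\<Sum>gs\<in>LL k (SG d). ennreal (\<delta> / k * (\<Sum>j<k. \<bar>ip d (gs!j) x\<bar>))) \<le> ennreal ((2^d)^k * \<delta>)" .
    qed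
  qed
  also have "\<dots> = ennreal ((2^d)^k * \<delta>)" by (simp add: emeasure_space_1)
  finally show ?thesis .
qed

definition rr :: "nat \<Rightarrow> (nat \<Rightarrow> real) \<Rightarrow> real \<Rightarrow> real list list \<Rightarrow> int list" where
  "rr d \<theta>s \<delta> gs = map (\<lambda>g. round (ip d g \<theta>s / \<delta>)) gs"

lemma round_err: assumes "\<delta> > 0" shows "\<bar>\<delta> * of_int (round (a / \<delta>)) - a\<bar> \<le> (\<delta>::real)"
proof -
  have "\<delta> * of_int (round (a / \<delta>)) - a = \<delta> * (of_int (round (a / \<delta>)) - a / \<delta>)"
    using assms by (simp add: field_simps)
  hence "\<bar>\<delta> * of_int (round (a / \<delta>)) - a\<bar> = \<delta> * \<bar>of_int (round (a / \<delta>)) - a / \<delta>\<bar>"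
    using assms by (simp add: abs_mult)
  also have "\<dots> \<le> \<delta> * (1/2)" using assms of_int_round_abs_le[of "a/\<delta>"] by (intro mult_left_mono) auto
  finally show ?thesis using assms by simp
qed

lemma point_close:
  fixes \<Delta> :: real and x :: "nat \<Rightarrow> real"
  assumes \<Delta>: "0 < \<Delta>" and gs: "length gs = kk \<Delta>"
  shows "\<bar>inner_d d (Phi d \<Delta> (gs, rr d \<theta>s (\<Delta>/8) gs)) x - inner_d d \<theta>s x\<bar>
     \<le> \<bar>(\<Sum>j<kk \<Delta>. YY d \<theta>s x (gs!j)) / kk \<Delta>\<bar> + (\<Delta>/8) / kk \<Delta> * (\<Sum>j<kk \<Delta>. \<bar>ip d (gs!j) x\<bar>)"
proof -
  define k where "k = kk \<Delta>"
  define \<delta> where "\<delta> = \<Delta>/8"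
  have k: "k \<ge> 1" unfolding k_def using kk_pos[OF \<Delta>] .
  have \<delta>: "\<delta> > 0" unfolding \<delta>_def using \<Delta> by simp
  define a where "a j = ip d (gs!j) \<theta>s" for j
  define b where "b j = ip d (gs!j) x" for j
  define c where "c = inner_d d \<theta>s x"
  define r where "r j = (of_int (round (a j / \<delta>)) :: real)" for j
  have inn: "inner_d d (Phi d \<Delta> (gs, rr d \<theta>s \<delta> gs)) x = \<delta> / k * (\<Sum>j<k. r j * b j)"
    unfolding inner_Phi k_def[symmetric] \<delta>_def[symmetric]
    using gs by (simp add: rr_def r_def a_def b_def k_def)
  have Tk: "(\<Sum>j<k. YY d \<theta>s x (gs!j)) = (\<Sum>j<k. a j * b j) - k * c"
    unfolding YY_def a_def b_def c_def by (simp add: sum_subtractf)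
  have "inner_d d (Phi d \<Delta> (gs, rr d \<theta>s \<delta> gs)) x - c =
      (\<Sum>j<k. YY d \<theta>s x (gs!j)) / k + (\<Sum>j<k. (\<delta> * r j - a j) * b j) / k"
    unfolding inn Tk using k by (simp add: field_simps sum_subtractf sum_distrib_left sum_divide_distrib)
  also have "\<bar>\<dots>\<bar> \<le> \<bar>(\<Sum>j<k. YY d \<theta>s x (gs!j)) / k\<bar> + \<bar>(\<Sum>j<k. (\<delta> * r j - a j) * b j) / k\<bar>"
    by (rule abs_triangle_ineq)
  also have "\<bar>(\<Sum>j<k. (\<delta> * r j - a j) * b j) / k\<bar> \<le> \<delta> / k * (\<Sum>j<k. \<bar>b j\<bar>)"
  proof -
    have "\<bar>(\<Sum>j<k. (\<delta> * r j - a j) * b j)\<bar> \<le> (\<Sum>j<k. \<bar>(\<delta> * r j - a j) * b j\<bar>)" by (rule sum_abs)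
    also have "\<dots> \<le> (\<Sum>j<k. \<delta> * \<bar>b j\<bar>)"
      unfolding abs_mult r_def by (intro sum_mono mult_right_mono round_err[OF \<delta>]) auto
    finally show ?thesis using k by (simp add: sum_distrib_left[symmetric] field_simps)
  qed
  finally show ?thesis unfolding k_def \<delta>_def b_def c_def by simp
qed

lemma good_close:
  assumes \<mu>: "\<mu> \<in> dists_X d" and \<Delta>: "0 < \<Delta>" and gs: "gs \<in> LL (kk \<Delta>) (SG d)"
    and i1: "I1 d \<mu> \<theta>s (kk \<Delta>) gs \<le> ennreal (\<Delta>/2)"
    and i2: "I2 d \<mu> (\<Delta>/8) (kk \<Delta>) gs \<le> ennreal (\<Delta>/2)"
  shows "Phi d \<Delta> (gs, rr d \<theta>s (\<Delta>/8) gs) \<in> close_set d \<mu> \<theta>s \<Delta>"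
proof -
  note X = X_facts[OF \<mu>]
  have len: "length gs = kk \<Delta>" using gs unfolding LL_def by auto
  have "(\<integral>\<^sup>+ x. ennreal \<bar>inner_d d (Phi d \<Delta> (gs, rr d \<theta>s (\<Delta>/8) gs)) x - inner_d d \<theta>s x\<bar> \<partial>\<mu>)
     \<le> (\<integral>\<^sup>+ x. (ennreal \<bar>(\<Sum>j<kk \<Delta>. YY d \<theta>s x (gs!j)) / kk \<Delta>\<bar> + ennreal ((\<Delta>/8) / kk \<Delta> * (\<Sum>j<kk \<Delta>. \<bar>ip d (gs!j) x\<bar>))) \<partial>\<mu>)"
  proof (rule nn_integral_mono)
    fix x
    show "ennreal \<bar>inner_d d (Phi d \<Delta> (gs, rr d \<theta>s (\<Delta>/8) gs)) x - inner_d d \<theta>s x\<bar>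
        \<le> ennreal \<bar>(\<Sum>j<kk \<Delta>. YY d \<theta>s x (gs!j)) / kk \<Delta>\<bar> + ennreal ((\<Delta>/8) / kk \<Delta> * (\<Sum>j<kk \<Delta>. \<bar>ip d (gs!j) x\<bar>))"
    proof -
      have "ennreal \<bar>inner_d d (Phi d \<Delta> (gs, rr d \<theta>s (\<Delta>/8) gs)) x - inner_d d \<theta>s x\<bar>
        \<le> ennreal (\<bar>(\<Sum>j<kk \<Delta>. YY d \<theta>s x (gs!j)) / kk \<Delta>\<bar> + (\<Delta>/8) / kk \<Delta> * (\<Sum>j<kk \<Delta>. \<bar>ip d (gs!j) x\<bar>))"
        by (rule ennreal_leI, rule point_close[OF \<Delta> len])
      also have "\<dots> = ennreal \<bar>(\<Sum>j<kk \<Delta>. YY d \<theta>s x (gs!j)) / kk \<Delta>\<bar> + ennreal ((\<Delta>/8) / kk \<Delta> * (\<Sum>j<kk \<Delta>. \<bar>ip d (gs!j) x\<bar>))"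
        by (rule ennreal_plus) (use \<Delta> in \<open>auto intro!: sum_nonneg\<close>)
      finally show ?thesis .
    qed
  qed
  also have "\<dots> = I1 d \<mu> \<theta>s (kk \<Delta>) gs + I2 d \<mu> (\<Delta>/8) (kk \<Delta>) gs"
    unfolding I1_def I2_def
    by (rule nn_integral_add, rule meas_tr[OF X(2) meas_YYsum], rule meas_tr[OF X(2) meas_I2f])
  also have "\<dots> \<le> ennreal (\<Delta>/2) + ennreal (\<Delta>/2)" by (intro add_mono i1 i2)
  also have "\<dots> = ennreal \<Delta>" using \<Delta> by (simp add: ennreal_plus[symmetric])
  finally show ?thesis unfolding close_set_def using Phi_space by simp
qed

lemma enn_count:
  assumes "of_nat n * ennreal t \<le> ennreal s" "t > 0" "s \<ge> 0"
  shows "real n * t \<le> s"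
proof -
  have "of_nat n * ennreal t = ennreal (real n * t)"
    using assms(2) by (simp add: ennreal_of_nat_eq_real_of_nat ennreal_mult'')
  with assms show ?thesis by (simp add: ennreal_le_iff)
qed

lemma round_bound: assumes "\<bar>t\<bar> \<le> real N" shows "round t \<in> {- int N .. int N}"
proof -
  have "round t \<le> round (real N)" using assms by (intro round_mono) auto
  moreover have "round (- real N) \<le> round t" using assms by (intro round_mono) auto
  moreover have "round (- real N) = - int N"
    by (metis of_int_minus of_int_of_nat_eq round_of_int)
  ultimately show ?thesis by simp
qed

lemma count_main:
  assumes \<mu>: "\<mu> \<in> dists_X d" and \<Delta>: "0 < \<Delta>" "\<Delta> \<le> 1" and th: "norm_d d \<theta>s \<le> 1"
  shows "ennreal (1 / (4 * (2 * real (NN \<Delta>) + 1) ^ kk \<Delta>)) \<le> emeasure (pp d \<Delta>) (close_set d \<mu> \<theta>s \<Delta>)"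
proof -
  define k where "k = kk \<Delta>"
  define G where "G = LL k (SG d)"
  define C :: real where "C = (2^d)^k"
  define \<delta> :: real where "\<delta> = \<Delta>/8"
  have k1: "k \<ge> 1" unfolding k_def by (rule kk_pos[OF \<Delta>(1)])
  have kge: "real k \<ge> 192 / \<Delta>^2" unfolding k_def by (rule kk_ge[OF \<Delta>(1)])
  have th2: "(\<Sum>i<d. (\<theta>s i)^2) \<le> 1" by (rule norm_sq[OF th])
  have finG: "finite G" unfolding G_def by (rule fin_G)
  have cardG: "real (card G) = C" unfolding G_def C_def card_G by simp
  have Cpos: "C > 0" unfolding C_def by simp
  define Bad1 where "Bad1 = {gs\<in>G. 4 * real k < (\<Sum>j<k. (ip d (gs!j) \<theta>s)^2)}"
  define Bad2 where "Bad2 = {gs\<in>G. ennreal (\<Delta>/2) < I1 d \<mu> \<theta>s k gs}"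
  define Bad3 where "Bad3 = {gs\<in>G. ennreal (\<Delta>/2) < I2 d \<mu> \<delta> k gs}"
  have b1: "real (card Bad1) \<le> C / 4"
  proof -
    have "real (card Bad1) * (4 * real k) \<le> (\<Sum>gs\<in>G. \<Sum>j<k. (ip d (gs!j) \<theta>s)^2)"
      unfolding Bad1_def using k1 by (intro markov_count finG) (auto intro: sum_nonneg)
    also have "\<dots> \<le> real k * C" unfolding G_def C_def by (rule pointA[OF th2])
    finally show ?thesis using k1 by (simp add: field_simps)
  qed
  have b2: "real (card Bad2) \<le> C / 4"
  proof -
    have "of_nat (card Bad2) * ennreal (\<Delta>/2) \<le> (\<Sum>gs\<in>G. I1 d \<mu> \<theta>s k gs)"
      unfolding Bad2_def using \<Delta> by (intro markov_count_enn finG) auto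
    also have "\<dots> \<le> ennreal (C * (\<Delta>/8))" unfolding G_def C_def
    proof (rule sumI1[OF \<mu> th2 k1])
      show "\<Delta>/8 > 0" using \<Delta> by simp
      have "real k * (\<Delta>/8)^2 \<ge> 192 / \<Delta>^2 * (\<Delta>/8)^2" using kge by (intro mult_right_mono) auto
      also have "192 / \<Delta>^2 * (\<Delta>/8)^2 = 3" using \<Delta> by (simp add: field_simps power2_eq_square)
      finally show "real k * (\<Delta>/8)^2 \<ge> 2" by simp
    qed
    finally have "real (card Bad2) * (\<Delta>/2) \<le> C * (\<Delta>/8)"
      by (rule enn_count) (use \<Delta> Cpos in auto)
    thus ?thesis using \<Delta> by (simp add: field_simps)
  qed
  have b3: "real (card Bad3) \<le> C / 4"
  proof -
    have "of_nat (card Bad3) * ennreal (\<Delta>/2) \<le> (\<Sum>gs\<in>G. I2 d \<mu> \<delta> k gs)"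
      unfolding Bad3_def using \<Delta> by (intro markov_count_enn finG) auto
    also have "\<dots> \<le> ennreal (C * \<delta>)" unfolding G_def C_def
      by (rule sumI2[OF \<mu> k1]) (use \<Delta> in \<open>simp add: \<delta>_def\<close>)
    finally have "real (card Bad3) * (\<Delta>/2) \<le> C * \<delta>"
      by (rule enn_count) (use \<Delta> Cpos in \<open>auto simp: \<delta>_def\<close>)
    thus ?thesis using \<Delta> by (simp add: field_simps \<delta>_def)
  qed
  define Good where "Good = G - (Bad1 \<union> Bad2 \<union> Bad3)"
  have cGood: "real (card Good) \<ge> C / 4"
  proof -
    have "card (Bad1 \<union> Bad2 \<union> Bad3) \<le> card Bad1 + card Bad2 + card Bad3"
      by (meson card_Un_le add_right_mono order_trans)
    hence "real (card (Bad1 \<union> Bad2 \<union> Bad3)) \<le> 3 * C / 4" using b1 b2 b3 by linarith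
    moreover have "card G \<le> card Good + card (Bad1 \<union> Bad2 \<union> Bad3)"
    proof -
      have sub: "G \<subseteq> Good \<union> (Bad1 \<union> Bad2 \<union> Bad3)" unfolding Good_def by blast
      have finU: "finite (Good \<union> (Bad1 \<union> Bad2 \<union> Bad3))"
        unfolding Good_def Bad1_def Bad2_def Bad3_def using finG by auto
      have "card G \<le> card (Good \<union> (Bad1 \<union> Bad2 \<union> Bad3))" by (rule card_mono[OF finU sub])
      also have "\<dots> \<le> card Good + card (Bad1 \<union> Bad2 \<union> Bad3)" by (rule card_Un_le)
      finally show ?thesis .
    qed
    ultimately show ?thesis using cardG by linarith
  qed
  define f where "f gs = (gs, rr d \<theta>s \<delta> gs)" for gs
  have fin: "f ` Good \<subseteq> {\<omega>\<in>Om d \<Delta>. Phi d \<Delta> \<omega> \<in> close_set d \<mu> \<theta>s \<Delta>}"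
  proof
    fix \<omega> assume "\<omega> \<in> f ` Good"
    then obtain gs where gs: "gs \<in> Good" and \<omega>: "\<omega> = f gs" by auto
    have gsG: "gs \<in> G" and n1: "\<not> 4 * real k < (\<Sum>j<k. (ip d (gs!j) \<theta>s)^2)"
      and n2: "\<not> ennreal (\<Delta>/2) < I1 d \<mu> \<theta>s k gs" and n3: "\<not> ennreal (\<Delta>/2) < I2 d \<mu> \<delta> k gs"
      using gs unfolding Good_def Bad1_def Bad2_def Bad3_def by auto
    have len: "length gs = k" using gsG unfolding G_def LL_def by auto
    have "rr d \<theta>s \<delta> gs \<in> LL k (WW \<Delta>)"
    proof -
      have "round (ip d g \<theta>s / \<delta>) \<in> WW \<Delta>" if g: "g \<in> set gs" for g
      proof -
        obtain j where j: "j < k" "g = gs!j" using g len by (metis in_set_conv_nth)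
        have "(\<lambda>j. (ip d (gs!j) \<theta>s)^2) j \<le> sum (\<lambda>j. (ip d (gs!j) \<theta>s)^2) {..<k}"
          by (rule member_le_sum) (use j in auto)
        hence "(ip d g \<theta>s)^2 \<le> (\<Sum>j<k. (ip d (gs!j) \<theta>s)^2)" using j by simp
        also have "\<dots> \<le> 4 * real k" using n1 by simp
        finally have "(ip d g \<theta>s)^2 \<le> 4 * real k" .
        hence "sqrt ((ip d g \<theta>s)^2) \<le> sqrt (4 * real k)" by (rule real_sqrt_le_mono)
        hence "\<bar>ip d g \<theta>s\<bar> \<le> sqrt (4 * real k)" by simp
        also have "sqrt (4 * real k) = 2 * sqrt (real k)" by (simp add: real_sqrt_mult)
        finally have "\<bar>ip d g \<theta>s / \<delta>\<bar> \<le> 2 * sqrt (real k) / (\<Delta>/8)"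
          using \<Delta> unfolding \<delta>_def by (simp add: divide_right_mono)
        also have "\<dots> \<le> real (NN \<Delta>)" unfolding NN_def k_def by linarith
        finally show ?thesis unfolding WW_def by (rule round_bound)
      qed
      thus ?thesis unfolding rr_def LL_def using len by auto
    qed
    hence "\<omega> \<in> Om d \<Delta>" using gsG unfolding \<omega> f_def Om_def G_def k_def by simp
    moreover have "Phi d \<Delta> \<omega> \<in> close_set d \<mu> \<theta>s \<Delta>"
      unfolding \<omega> f_def \<delta>_def
      by (rule good_close[OF \<mu> \<Delta>(1)]) (use gsG n2 n3 in \<open>auto simp: G_def k_def \<delta>_def not_less\<close>)
    ultimately show "\<omega> \<in> {\<omega>\<in>Om d \<Delta>. Phi d \<Delta> \<omega> \<in> close_set d \<mu> \<theta>s \<Delta>}" by simp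
  qed
  have inj: "inj_on f Good" unfolding f_def inj_on_def by auto
  have "card Good \<le> card {\<omega>\<in>Om d \<Delta>. Phi d \<Delta> \<omega> \<in> close_set d \<mu> \<theta>s \<Delta>}"
    using card_mono[OF _ fin] card_image[OF inj] Om_finite by auto
  hence cnt: "C / 4 \<le> real (card {\<omega>\<in>Om d \<Delta>. Phi d \<Delta> \<omega> \<in> close_set d \<mu> \<theta>s \<Delta>})" using cGood by linarith
  have cOm: "real (card (Om d \<Delta>)) = C * (2 * real (NN \<Delta>) + 1) ^ k"
    unfolding Om_card C_def k_def by (simp add: add.commute)
  have "1 / (4 * (2 * real (NN \<Delta>) + 1) ^ kk \<Delta>) = (C / 4) / real (card (Om d \<Delta>))"
    unfolding cOm k_def using Cpos by (simp add: field_simps)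
  also have "\<dots> \<le> real (card {\<omega>\<in>Om d \<Delta>. Phi d \<Delta> \<omega> \<in> close_set d \<mu> \<theta>s \<Delta>}) / real (card (Om d \<Delta>))"
    using cnt by (intro divide_right_mono) auto
  finally show ?thesis unfolding emeasure_pp[OF close_meas[OF \<mu>]] by (rule ennreal_leI)
qed

lemma nat_ceil_le: assumes "(y::real) \<ge> 0" shows "real (nat \<lceil>y\<rceil>) \<le> y + 1"
proof -
  have "real_of_int \<lceil>y\<rceil> \<le> y + 1" using ceiling_correct[of y] by linarith
  moreover have "0 \<le> \<lceil>y\<rceil>" using assms by simp
  ultimately show ?thesis by simp
qed

lemma numeric:
  assumes \<Delta>: "0 < \<Delta>" "\<Delta> \<le> 1/1000"
  shows "4 * (2 * real (NN \<Delta>) + 1) ^ kk \<Delta> \<le> exp (600 / \<Delta>^2 * ln (1 / \<Delta>))"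
proof -
  define L where "L = ln (1/\<Delta>)"
  define k where "k = real (kk \<Delta>)"
  define M where "M = 2 * real (NN \<Delta>) + 1"
  have id2: "1 \<le> 1 / \<Delta>^2"
  proof -
    have "\<Delta>^2 \<le> 1" by (rule power_le_one) (use \<Delta> in auto)
    thus ?thesis using \<Delta> by (simp add: field_simps)
  qed
  have L4: "ln 4 \<le> L" unfolding L_def using \<Delta> by (subst ln_le_cancel_iff) (auto simp: field_simps)
  have L0: "L \<ge> 0" using L4 by (smt (verit) ln_ge_zero)
  have k: "k \<le> 193 / \<Delta>^2"
  proof -
    have "k \<le> 192 / \<Delta>^2 + 1" unfolding k_def kk_def by (rule nat_ceil_le) simp
    thus ?thesis using id2 by simp
  qed
  have k0: "k \<ge> 0" unfolding k_def by simp
  have sk: "sqrt k \<le> 14 / \<Delta>"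
  proof -
    have "sqrt k \<le> sqrt (193 / \<Delta>^2)" using k by (rule real_sqrt_le_mono)
    also have "\<dots> = sqrt 193 / \<Delta>" using \<Delta> by (simp add: real_sqrt_divide)
    also have "sqrt 193 \<le> sqrt (14^2)" by (rule real_sqrt_le_mono) simp
    hence "sqrt 193 / \<Delta> \<le> 14 / \<Delta>" using \<Delta> by (simp add: divide_right_mono)
    finally show ?thesis .
  qed
  have N: "real (NN \<Delta>) \<le> 16 * sqrt k / \<Delta> + 1"
  proof -
    have "2 * sqrt k / (\<Delta>/8) = 16 * sqrt k / \<Delta>" by simp
    moreover have "real (NN \<Delta>) \<le> 2 * sqrt k / (\<Delta>/8) + 1" unfolding NN_def k_def
      by (rule nat_ceil_le) (use \<Delta> in simp)
    ultimately show ?thesis by simp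
  qed
  have "16 * sqrt k / \<Delta> \<le> 16 * (14 / \<Delta>) / \<Delta>" using sk \<Delta> by (intro divide_right_mono) auto
  hence "M \<le> 448 / \<Delta>^2 + 3" using N unfolding M_def by (simp add: power2_eq_square)
  also have "\<dots> \<le> 451 / \<Delta>^2" using id2 by simp
  also have "\<dots> \<le> 1 / \<Delta>^3" using \<Delta> by (simp add: field_simps power2_eq_square power3_eq_cube)
  finally have M: "M \<le> 1 / \<Delta>^3" .
  have M1: "M \<ge> 1" unfolding M_def by simp
  have lnM: "ln M \<le> 3 * L"
  proof -
    have "ln M \<le> ln (1 / \<Delta>^3)" using M M1 \<Delta> by (subst ln_le_cancel_iff) auto
    also have "\<dots> = 3 * L" unfolding L_def using \<Delta> by (simp add: ln_div ln_realpow)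
    finally show ?thesis .
  qed
  have "4 * M ^ kk \<Delta> = exp (ln 4 + k * ln M)"
    using M1 unfolding k_def by (simp add: exp_add exp_of_nat_mult)
  also have "\<dots> \<le> exp (L + (193 / \<Delta>^2) * (3 * L))"
  proof -
    have "k * ln M \<le> (193 / \<Delta>^2) * (3 * L)"
      using k k0 lnM L0 M1 by (intro mult_mono) auto
    thus ?thesis using L4 by simp
  qed
  also have "\<dots> \<le> exp (600 / \<Delta>^2 * L)"
  proof -
    have "L \<le> L / \<Delta>^2" using id2 L0 by (metis mult_left_mono mult.right_neutral times_divide_eq_right)
    moreover have "(193 / \<Delta>^2) * (3 * L) = 579 * (L / \<Delta>^2)" "600 / \<Delta>^2 * L = 600 * (L / \<Delta>^2)" by simp_all
    ultimately have "L + (193 / \<Delta>^2) * (3 * L) \<le> 600 / \<Delta>^2 * L" using L0 by linarith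
    thus ?thesis by simp
  qed
  finally show ?thesis unfolding M_def L_def .
qed

lemma part2:
  assumes \<Delta>: "0 < \<Delta>" "\<Delta> \<le> 1/1000"
  shows "N_frac d (unit_pred d) (\<lambda>_. True) \<Delta> \<le> ennreal (exp (600 / \<Delta>^2 * ln (1 / \<Delta>)))"
proof -
  define M where "M = 4 * (2 * real (NN \<Delta>) + 1) ^ kk \<Delta>"
  have Mpos: "M > 0" unfolding M_def by simp
  have "N_frac d (unit_pred d) (\<lambda>_. True) \<Delta> \<le> (SUP (\<mu>, \<theta>s) \<in> dists_X d \<times> {\<theta> \<in> space (vecs d). unit_pred d \<theta>}.
        inverse (emeasure (pp d \<Delta>) (close_set d \<mu> \<theta>s \<Delta>)))"
    unfolding N_frac_def by (rule INF_lower) (rule pp_class)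
  also have "\<dots> \<le> ennreal M"
  proof (rule SUP_least)
    fix z assume "z \<in> dists_X d \<times> {\<theta> \<in> space (vecs d). unit_pred d \<theta>}"
    then obtain \<mu> \<theta>s where z: "z = (\<mu>, \<theta>s)" "\<mu> \<in> dists_X d" "norm_d d \<theta>s \<le> 1"
      unfolding unit_pred_def by auto
    have "ennreal (1 / M) \<le> emeasure (pp d \<Delta>) (close_set d \<mu> \<theta>s \<Delta>)"
      unfolding M_def by (rule count_main[OF z(2) \<Delta>(1) _ z(3)]) (use \<Delta> in simp)
    hence "inverse (emeasure (pp d \<Delta>) (close_set d \<mu> \<theta>s \<Delta>)) \<le> ennreal (1 / (1 / M))"
      by (rule inv_le) (use Mpos in simp)
    thus "(case z of (\<mu>, \<theta>s) \<Rightarrow> inverse (emeasure (pp d \<Delta>) (close_set d \<mu> \<theta>s \<Delta>))) \<le> ennreal M"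
      using z(1) by simp
  qed
  also have "\<dots> \<le> ennreal (exp (600 / \<Delta>^2 * ln (1 / \<Delta>)))"
    unfolding M_def by (intro ennreal_leI numeric \<Delta>)
  finally show ?thesis .
qed

theorem propositionC5:
  shows "\<exists>c C d0 \<Delta>0 :: real. c > 0 \<and> C > 0 \<and> d0 > 0 \<and> \<Delta>0 > 0 \<and>
    (\<forall>d::nat. real d \<ge> d0 \<longrightarrow> (\<forall>\<Delta>::real. 0 < \<Delta> \<and> \<Delta> \<le> 1/2 \<longrightarrow>
        ennreal (exp (c * real d)) \<le> N_frac d (unit_pred d) (unit_pred d) \<Delta>)) \<and>
    (\<forall>d::nat. d \<ge> 1 \<longrightarrow> (\<forall>\<Delta>::real. 0 < \<Delta> \<and> \<Delta> \<le> \<Delta>0 \<longrightarrow>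
        N_frac d (unit_pred d) (\<lambda>_. True) \<Delta> \<le> ennreal (exp (C / \<Delta>^2 * ln (1 / \<Delta>)))))"
proof -
  have A: "\<forall>d::nat. real d \<ge> 1 \<longrightarrow> (\<forall>\<Delta>::real. 0 < \<Delta> \<and> \<Delta> \<le> 1/2 \<longrightarrow>
        ennreal (exp (1/8 * real d)) \<le> N_frac d (unit_pred d) (unit_pred d) \<Delta>)"
  proof (intro allI impI)
    fix d :: nat and \<Delta> :: real
    assume "1 \<le> real d" "0 < \<Delta> \<and> \<Delta> \<le> 1/2"
    hence "d \<ge> 1" "0 < \<Delta>" "\<Delta> \<le> 1/2" by auto
    from part1[OF this] show "ennreal (exp (1/8 * real d)) \<le> N_frac d (unit_pred d) (unit_pred d) \<Delta>"
      by (simp add: mult.commute)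
  qed
  have B: "\<forall>d::nat. d \<ge> 1 \<longrightarrow> (\<forall>\<Delta>::real. 0 < \<Delta> \<and> \<Delta> \<le> 1/1000 \<longrightarrow>
        N_frac d (unit_pred d) (\<lambda>_. True) \<Delta> \<le> ennreal (exp (600 / \<Delta>^2 * ln (1 / \<Delta>))))"
    using part2 by blast
  show ?thesis
    apply (rule exI[of _ "1/8"], rule exI[of _ 600], rule exI[of _ 1], rule exI[of _ "1/1000"])
    using A B by simp
qed


end
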